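(* Let $H=E_0|E_0\rangle\langle E_0|+E_1|E_1\rangle\langle E_1|$ be a non-degenerate Hamiltonian on a qubit ($E_0\ne E_1$, $\{|E_0\rangle,|E_1\rangle\}$ orthonormal), and let $|\psi_0\rangle=c_0|E_0\rangle+c_1|E_1\rangle$ with $|c_0|^2+|c_1|^2=1$. Let $\{|k_n\rangle\}_n$ be the Krylov basis generated from $|k_0\rangle=|\psi_0\rangle$ and $H$ by the Lanczos algorithm, and let $K(t)=\sum_n n|\langle k_n|e^{-iHt}|\psi_0\rangle|^2$ be the spread complexity. Then for all $t$, $$K(t)=C_{\ell_1}^2\sin^2\!\left(\frac{\omega t}{2}\right),$$ where $\omega=E_1-E_0$ and $C_{\ell_1}=2|c_0||c_1|$ is the $\ell_1$-norm of coherence of $|\psi_0\rangle$ in the basis $\{|E_0\rangle,|E_1\rangle\}$. *)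

theory Defs
  imports "HOL-Analysis.Analysis"
begin

type_synonym qubit = "complex ^ 2"

definition cinner :: "qubit \<Rightarrow> qubit \<Rightarrow> complex" where
  "cinner x y = (\<Sum>i\<in>UNIV. cnj (x $ i) * y $ i)"

definition hnorm :: "qubit \<Rightarrow> real" where
  "hnorm x = sqrt (Re (cinner x x))"

definition hamiltonian :: "real \<Rightarrow> real \<Rightarrow> qubit \<Rightarrow> qubit \<Rightarrow> qubit \<Rightarrow> qubit" where
  "hamiltonian E0 E1 e0 e1 v =
     (complex_of_real E0 * cinner e0 v) *s e0 + (complex_of_real E1 * cinner e1 v) *s e1"

definition evolve :: "(qubit \<Rightarrow> qubit) \<Rightarrow> real \<Rightarrow> qubit \<Rightarrow> qubit" where
  "evolve H t v = (\<Sum>n. ((- \<i> * complex_of_real t) ^ n / of_nat (fact n)) *s ((H ^^ n) v))"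

text \<open>State at step n: (k_{n-1}, k_n, b_n), with k_{-1} = 0, b_0 = 0.
  a_n = <k_n|H|k_n>, A_{n+1} = (H - a_n) k_n - b_n k_{n-1}, b_{n+1} = ||A_{n+1}||,
  k_{n+1} = A_{n+1} / b_{n+1}. When b_{n+1} = 0 the algorithm terminates; we then
  set all later Krylov vectors to 0, so they contribute nothing.\<close>
fun lanczos :: "(qubit \<Rightarrow> qubit) \<Rightarrow> qubit \<Rightarrow> nat \<Rightarrow> qubit \<times> qubit \<times> real" where
  "lanczos H psi 0 = (0, psi, 0)"
| "lanczos H psi (Suc n) =
     (case lanczos H psi n of (kp, k, b) \<Rightarrow>
        (let a = cinner k (H k);
             A = H k - a *s k - complex_of_real b *s kp;
             b' = hnorm A
         in (k, if b' = 0 then 0 else complex_of_real (1 / b') *s A, b')))"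

definition krylov :: "(qubit \<Rightarrow> qubit) \<Rightarrow> qubit \<Rightarrow> nat \<Rightarrow> qubit" where
  "krylov H psi n = fst (snd (lanczos H psi n))"

definition spread_complexity :: "(qubit \<Rightarrow> qubit) \<Rightarrow> qubit \<Rightarrow> real \<Rightarrow> real" where
  "spread_complexity H psi t =
     (\<Sum>n. real n * (cmod (cinner (krylov H psi n) (evolve H t psi)))\<^sup>2)"

definition l1_coherence :: "qubit \<Rightarrow> qubit \<Rightarrow> qubit \<Rightarrow> real" where
  "l1_coherence e0 e1 psi =
     (let b = (\<lambda>i::nat. if i = 0 then e0 else e1);
          rho = (\<lambda>i j. cinner (b i) psi * cnj (cinner (b j) psi))
      in (\<Sum>i\<in>{0,1::nat}. \<Sum>j\<in>{0,1::nat}. if i \<noteq> j then cmod (rho i j) else 0))"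

end

theory Submission
  imports Defs
begin


lemma sum_vec_nth: "(sum f S) $ i = sum (\<lambda>x. f x $ i) S"
  by (metis sum_eq vec_lambda_beta)

lemma sums_smult_vec:
  fixes v :: "complex ^ 'n"
  assumes "a sums A"
  shows "(\<lambda>n. a n *s v) sums (A *s v)"
  unfolding sums_def
proof (rule vec_tendstoI)
  fix i
  have "(\<lambda>m. (\<Sum>n<m. a n) * v $ i) \<longlonglongrightarrow> A * v $ i"
    using assms unfolding sums_def by (intro tendsto_mult_right)
  then show "(\<lambda>m. (\<Sum>n<m. a n *s v) $ i) \<longlonglongrightarrow> (A *s v) $ i"
    by (simp add: sum_vec_nth sum_distrib_right)
qed

lemma smult_comb: "k *s (a *s u + b *s v) = (k * a) *s u + (k * b) *s (v :: qubit)"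
  by (simp add: vec_eq_iff algebra_simps)

lemma cinner_add_right: "cinner x (y + z) = cinner x y + cinner x z"
  by (simp add: cinner_def sum.distrib ring_distribs)
lemma cinner_add_left: "cinner (x + y) z = cinner x z + cinner y z"
  by (simp add: cinner_def sum.distrib ring_distribs)
lemma cinner_diff_right: "cinner x (y - z) = cinner x y - cinner x z"
  by (simp add: cinner_def sum_subtractf ring_distribs)
lemma cinner_diff_left: "cinner (x - y) z = cinner x z - cinner y z"
  by (simp add: cinner_def sum_subtractf ring_distribs)
lemma cinner_smult_right: "cinner x (a *s y) = a * cinner x y"
  by (simp add: cinner_def sum_distrib_left mult.left_commute)
lemma cinner_smult_left: "cinner (a *s x) y = cnj a * cinner x y"
  by (simp add: cinner_def sum_distrib_left mult.assoc)
lemma cinner_commute: "cinner y x = cnj (cinner x y)"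
  by (simp add: cinner_def mult.commute)
lemma cinner_zero_right[simp]: "cinner x 0 = 0"
  by (simp add: cinner_def)
lemma cinner_zero_left[simp]: "cinner 0 x = 0"
  by (simp add: cinner_def)

lemmas cinner_simps = cinner_add_right cinner_add_left cinner_diff_right cinner_diff_left
  cinner_smult_right cinner_smult_left

context
  fixes E0 E1 :: real and e0 e1 :: qubit
  assumes o0: "cinner e0 e0 = 1" and o1: "cinner e1 e1 = 1" and o01: "cinner e0 e1 = 0"
begin

lemma o10: "cinner e1 e0 = 0"
  using o01 by (subst cinner_commute) simp

lemma ip: "cinner (a *s e0 + b *s e1) (c *s e0 + d *s e1) = cnj a * c + cnj b * d"
  by (simp add: cinner_simps o0 o1 o01 o10)

lemma ip0: "cinner e0 (c *s e0 + d *s e1) = c"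
  using ip[of 1 0 c d] by simp
lemma ip1: "cinner e1 (c *s e0 + d *s e1) = d"
  using ip[of 0 1 c d] by simp

lemma Hc: "hamiltonian E0 E1 e0 e1 (a *s e0 + b *s e1) = (of_real E0 * a) *s e0 + (of_real E1 * b) *s e1"
  by (simp add: hamiltonian_def ip0 ip1)

lemma H0: "hamiltonian E0 E1 e0 e1 0 = 0"
  by (simp add: hamiltonian_def)

lemma Hpow: "(hamiltonian E0 E1 e0 e1 ^^ n) (a *s e0 + b *s e1)
   = (of_real E0 ^ n * a) *s e0 + (of_real E1 ^ n * b) *s e1"
  by (induction n) (simp_all add: Hc mult.assoc)

lemma exp_sums: "(\<lambda>n. (- \<i> * complex_of_real t) ^ n / of_nat (fact n) * (of_real E ^ n * c))
   sums (exp (- \<i> * of_real t * of_real E) * c)"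
proof -
  have "(\<lambda>n. (- \<i> * of_real t * of_real E) ^ n /\<^sub>R fact n) sums exp (- \<i> * of_real t * of_real E)"
    by (rule exp_converges)
  from sums_mult2[OF this, of c] show ?thesis
  proof (rule back_subst[of "\<lambda>f. f sums _"])
    show "(\<lambda>n. (- \<i> * of_real t * of_real E) ^ n /\<^sub>R fact n * c) =
      (\<lambda>n. (- \<i> * complex_of_real t) ^ n / of_nat (fact n) * (of_real E ^ n * c))"
    proof
      fix n
      have "(- \<i> * of_real t * of_real E) ^ n = (- \<i> * of_real t)^n * (of_real E :: complex) ^ n"
        by (rule power_mult_distrib)
      then show "(- \<i> * of_real t * of_real E) ^ n /\<^sub>R fact n * c =
        (- \<i> * complex_of_real t) ^ n / of_nat (fact n) * (of_real E ^ n * c)"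
        by (simp add: scaleR_conv_of_real divide_inverse mult_ac)
    qed
  qed
qed

lemma evolve_eq: "evolve (hamiltonian E0 E1 e0 e1) t (c0 *s e0 + c1 *s e1)
   = (exp (- \<i> * of_real t * of_real E0) * c0) *s e0 + (exp (- \<i> * of_real t * of_real E1) * c1) *s e1"
proof -
  have eq: "(\<lambda>n. ((- \<i> * complex_of_real t) ^ n / of_nat (fact n)) *s ((hamiltonian E0 E1 e0 e1 ^^ n) (c0 *s e0 + c1 *s e1)))
    = (\<lambda>n. ((- \<i> * complex_of_real t) ^ n / of_nat (fact n) * (of_real E0 ^ n * c0)) *s e0
         + ((- \<i> * complex_of_real t) ^ n / of_nat (fact n) * (of_real E1 ^ n * c1)) *s e1)"
    by (rule ext, unfold Hpow, rule smult_comb)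
  have sm: "\<dots> sums ((exp (- \<i> * of_real t * of_real E0) * c0) *s e0 + (exp (- \<i> * of_real t * of_real E1) * c1) *s e1)"
    by (rule sums_add; rule sums_smult_vec; rule exp_sums)
  show ?thesis unfolding evolve_def eq by (rule sums_unique[OF sm, symmetric])
qed

end


lemma cis_diff_sq: "(cmod (cis a - cis b))\<^sup>2 = 2 - 2 * cos (a - b)"
proof -
  have "(cmod (cis a - cis b))\<^sup>2 = (cos a - cos b)\<^sup>2 + (sin a - sin b)\<^sup>2"
    by (simp add: cmod_power2)
  also have "\<dots> = (sin a ^ 2 + cos a ^ 2) + (sin b ^ 2 + cos b ^ 2) - 2 * (cos a * cos b + sin a * sin b)"
    by (simp add: power2_diff algebra_simps)
  also have "\<dots> = 2 - 2 * cos (a - b)" by (simp add: cos_diff)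
  finally show ?thesis .
qed

lemma exp_diff_sq: "(cmod (exp (- \<i> * of_real t * of_real E1) - exp (- \<i> * of_real t * of_real E0)))\<^sup>2
   = 4 * (sin ((E1 - E0) * t / 2))\<^sup>2"
proof -
  have e: "exp (- \<i> * of_real t * of_real E) = cis (- (t * E))" for E
    by (simp add: cis_conv_exp mult.assoc)
  have "cos ((E1 - E0) * t) = cos (2 * ((E1 - E0) * t / 2))" by simp
  also have "\<dots> = 1 - 2 * (sin ((E1 - E0) * t / 2))\<^sup>2" by (rule cos_double_sin)
  finally have c: "cos ((E1 - E0) * t) = 1 - 2 * (sin ((E1 - E0) * t / 2))\<^sup>2" .
  have "cos (- (t * E1) - - (t * E0)) = cos ((E1 - E0) * t)"
    by (metis cos_minus minus_diff_eq left_diff_distrib mult.commute diff_minus_eq_add add.commute diff_conv_add_uminus)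
  then show ?thesis unfolding e cis_diff_sq using c by simp
qed

lemma hnorm0[simp]: "hnorm 0 = 0" by (simp add: hnorm_def)

lemma lz_zero:
  assumes "H 0 = 0" "snd (lanczos H psi n) = (0, 0)"
  shows "snd (lanczos H psi (Suc n)) = (0, 0)"
proof -
  obtain kp where "lanczos H psi n = (kp, 0, 0)" using assms(2) by (metis prod.collapse)
  then show ?thesis using assms(1) by (simp add: Let_def)
qed

lemma lz_after:
  assumes "H 0 = 0" "snd (lanczos H psi m) = (0, 0)" "m \<le> n"
  shows "krylov H psi n = 0"
proof -
  have "snd (lanczos H psi n) = (0, 0)"
    using assms(3)
  proof (induction n rule: dec_induct)
    case base then show ?case using assms(2) .
  next
    case (step n) then show ?case using lz_zero[of H psi] assms(1) by blast
  qed
  then show ?thesis unfolding krylov_def by simp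
qed


lemma lin2: "(a *s u + b *s v) - k *s (c *s u + d *s v) = (a - k*c) *s u + (b - k*d) *s (v :: qubit)"
  by (simp add: vec_eq_iff algebra_simps)
lemma lin3: "(a *s u + b *s v) - k *s (c *s u + d *s v) - m *s (p *s u + q *s v)
   = (a - k*c - m*p) *s u + (b - k*d - m*q) *s (v :: qubit)"
  by (simp add: vec_eq_iff algebra_simps)
lemma cnj_mult_self: "cnj a * a = complex_of_real ((cmod a)\<^sup>2)"
  by (metis complex_norm_square mult.commute of_real_power)

context
  fixes E0 E1 :: real and e0 e1 :: qubit
  assumes o0: "cinner e0 e0 = 1" and o1: "cinner e1 e1 = 1" and o01: "cinner e0 e1 = 0"
begin

lemma hnorm_comb: "hnorm (a *s e0 + b *s e1) = sqrt ((cmod a)\<^sup>2 + (cmod b)\<^sup>2)"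
  using ip[OF o0 o1 o01, of a b a b] by (simp add: hnorm_def cnj_mult_self)

lemma aval: "cinner (u *s e0 + v *s e1) (hamiltonian E0 E1 e0 e1 (u *s e0 + v *s e1))
   = of_real (E0 * (cmod u)\<^sup>2 + E1 * (cmod v)\<^sup>2)"
proof -
  have "cinner (u *s e0 + v *s e1) (hamiltonian E0 E1 e0 e1 (u *s e0 + v *s e1))
     = of_real E0 * (cnj u * u) + of_real E1 * (cnj v * v)"
    by (simp add: Hc[OF o0 o1 o01] ip[OF o0 o1 o01] mult_ac)
  then show ?thesis by (simp add: cnj_mult_self)
qed

end



theorem proposition3:
  fixes E0 E1 :: real and e0 e1 :: qubit and c0 c1 :: complex
  assumes "E0 \<noteq> E1"
    and "cinner e0 e0 = 1" and "cinner e1 e1 = 1" and "cinner e0 e1 = 0"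
    and "(cmod c0)\<^sup>2 + (cmod c1)\<^sup>2 = 1"
  shows "\<forall>t::real.
    spread_complexity (hamiltonian E0 E1 e0 e1) (c0 *s e0 + c1 *s e1) t =
      (l1_coherence e0 e1 (c0 *s e0 + c1 *s e1))\<^sup>2 * (sin ((E1 - E0) * t / 2))\<^sup>2"
proof
  fix t :: real
  note o = assms(2,3,4)
  define H where "H = hamiltonian E0 E1 e0 e1"
  define psi where "psi = c0 *s e0 + c1 *s e1"
  define x where "x = cmod c0"
  define y where "y = cmod c1"
  define w where "w = E1 - E0"
  have w0: "w \<noteq> 0" using assms(1) by (simp add: w_def)
  have xy: "x\<^sup>2 + y\<^sup>2 = 1" using assms(5) by (simp add: x_def y_def)
  have x0: "x \<ge> 0" "y \<ge> 0" by (simp_all add: x_def y_def)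
  have H0: "H 0 = 0" unfolding H_def by (rule H0[OF o])
  define p where "p = - w * y\<^sup>2"
  define q where "q = w * x\<^sup>2"
  have a0: "cinner psi (H psi) = of_real (E0 * x\<^sup>2 + E1 * y\<^sup>2)"
    unfolding psi_def H_def x_def y_def by (rule aval[OF o])
  have rp: "E0 - (E0 * x\<^sup>2 + E1 * y\<^sup>2) = p"
  proof -
    have "E0 - (E0 * x\<^sup>2 + E1 * y\<^sup>2) = E0 * (x\<^sup>2 + y\<^sup>2) - (E0 * x\<^sup>2 + E1 * y\<^sup>2)"
      using xy by simp
    also have "\<dots> = p" by (simp add: p_def w_def algebra_simps)
    finally show ?thesis .
  qed
  have rq: "E1 - (E0 * x\<^sup>2 + E1 * y\<^sup>2) = q"
  proof -
    have "E1 - (E0 * x\<^sup>2 + E1 * y\<^sup>2) = E1 * (x\<^sup>2 + y\<^sup>2) - (E0 * x\<^sup>2 + E1 * y\<^sup>2)"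
      using xy by simp
    also have "\<dots> = q" by (simp add: q_def w_def algebra_simps)
    finally show ?thesis .
  qed
  have A1: "H psi - cinner psi (H psi) *s psi - complex_of_real 0 *s 0
     = (of_real p * c0) *s e0 + (of_real q * c1) *s e1"
  proof -
    have "H psi - cinner psi (H psi) *s psi - complex_of_real 0 *s 0
      = (of_real E0 * c0 - of_real (E0 * x\<^sup>2 + E1 * y\<^sup>2) * c0) *s e0
        + (of_real E1 * c1 - of_real (E0 * x\<^sup>2 + E1 * y\<^sup>2) * c1) *s e1"
      unfolding a0 unfolding H_def psi_def Hc[OF o] by (simp add: lin2)
    also have "\<dots> = (of_real p * c0) *s e0 + (of_real q * c1) *s e1"
      by (simp flip: rp rq add: algebra_simps)
    finally show ?thesis .
  qed
  define b1 where "b1 = hnorm ((of_real p * c0) *s e0 + (of_real q * c1) *s e1)"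
  have b1v: "b1 = \<bar>w\<bar> * x * y"
  proof -
    have "b1 = sqrt ((\<bar>p\<bar> * x)\<^sup>2 + (\<bar>q\<bar> * y)\<^sup>2)"
      unfolding b1_def hnorm_comb[OF o] by (simp add: norm_mult x_def y_def)
    also have "(\<bar>p\<bar> * x)\<^sup>2 + (\<bar>q\<bar> * y)\<^sup>2 = (\<bar>w\<bar> * x * y)\<^sup>2 * (x\<^sup>2 + y\<^sup>2)"
      by (simp only: p_def q_def power_mult_distrib power2_abs abs_mult) algebra
    finally show ?thesis using xy x0 by simp
  qed
  define k1 where "k1 = (if b1 = 0 then 0 else complex_of_real (1 / b1) *s ((of_real p * c0) *s e0 + (of_real q * c1) *s e1))"
  have L1: "lanczos H psi (Suc 0) = (psi, k1, b1)"
    by (simp only: lanczos.simps prod.case Let_def A1) (simp add: b1_def k1_def)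
  have K1: "krylov H psi 1 = k1" using L1 by (simp add: krylov_def)
  have b1sq: "b1\<^sup>2 = w\<^sup>2 * x\<^sup>2 * y\<^sup>2"
    unfolding b1v by (simp add: power_mult_distrib)
  have k1v: "k1 = (of_real (p/b1) * c0) *s e0 + (of_real (q/b1) * c1) *s e1" if "b1 \<noteq> 0"
    using that by (simp add: k1_def smult_comb divide_inverse mult_ac)
  have sqp: "(p/b1)\<^sup>2 * x\<^sup>2 = y\<^sup>2" if "b1 \<noteq> 0"
  proof -
    have "(p/b1)\<^sup>2 * x\<^sup>2 = (p\<^sup>2 * x\<^sup>2) / b1\<^sup>2" by (simp add: power_divide)
    also have "p\<^sup>2 * x\<^sup>2 = y\<^sup>2 * b1\<^sup>2" unfolding b1sq p_def by algebra
    finally show ?thesis using that by simp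
  qed
  have sqq: "(q/b1)\<^sup>2 * y\<^sup>2 = x\<^sup>2" if "b1 \<noteq> 0"
  proof -
    have "(q/b1)\<^sup>2 * y\<^sup>2 = (q\<^sup>2 * y\<^sup>2) / b1\<^sup>2" by (simp add: power_divide)
    also have "q\<^sup>2 * y\<^sup>2 = x\<^sup>2 * b1\<^sup>2" unfolding b1sq q_def by algebra
    finally show ?thesis using that by simp
  qed
  have cm: "(cmod (of_real r * c))\<^sup>2 = r\<^sup>2 * (cmod c)\<^sup>2" for r c
    by (simp add: norm_mult power_mult_distrib)
  have a1: "cinner k1 (H k1) = of_real (E0 * y\<^sup>2 + E1 * x\<^sup>2)" if "b1 \<noteq> 0"
    unfolding k1v[OF that] H_def aval[OF o] cm using sqp[OF that] sqq[OF that]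
    by (simp add: x_def y_def)
  have rp1: "(E0 - (E0 * y\<^sup>2 + E1 * x\<^sup>2)) * (p/b1) = b1" if "b1 \<noteq> 0"
  proof -
    have "E0 - (E0 * y\<^sup>2 + E1 * x\<^sup>2) = E0 * (x\<^sup>2 + y\<^sup>2) - (E0 * y\<^sup>2 + E1 * x\<^sup>2)"
      using xy by simp
    also have "\<dots> = - w * x\<^sup>2" by (simp add: w_def algebra_simps)
    finally have "(E0 - (E0 * y\<^sup>2 + E1 * x\<^sup>2)) * (p/b1) = (w\<^sup>2 * x\<^sup>2 * y\<^sup>2) / b1"
      by (simp add: p_def power2_eq_square)
    also have "\<dots> = b1" unfolding b1sq[symmetric] using that by (simp add: power2_eq_square)
    finally show ?thesis .
  qed
  have rq1: "(E1 - (E0 * y\<^sup>2 + E1 * x\<^sup>2)) * (q/b1) = b1" if "b1 \<noteq> 0"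
  proof -
    have "E1 - (E0 * y\<^sup>2 + E1 * x\<^sup>2) = E1 * (x\<^sup>2 + y\<^sup>2) - (E0 * y\<^sup>2 + E1 * x\<^sup>2)"
      using xy by simp
    also have "\<dots> = w * y\<^sup>2" by (simp add: w_def algebra_simps)
    finally have "(E1 - (E0 * y\<^sup>2 + E1 * x\<^sup>2)) * (q/b1) = (w\<^sup>2 * x\<^sup>2 * y\<^sup>2) / b1"
      by (simp add: q_def power2_eq_square)
    also have "\<dots> = b1" unfolding b1sq[symmetric] using that by (simp add: power2_eq_square)
    finally show ?thesis .
  qed
  have A2: "H k1 - cinner k1 (H k1) *s k1 - complex_of_real b1 *s psi = 0" if "b1 \<noteq> 0"
  proof -
    let ?a = "E0 * y\<^sup>2 + E1 * x\<^sup>2"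
    have "H k1 - cinner k1 (H k1) *s k1 - complex_of_real b1 *s psi
      = (of_real E0 * (of_real (p/b1) * c0) - of_real ?a * (of_real (p/b1) * c0) - of_real b1 * c0) *s e0
      + (of_real E1 * (of_real (q/b1) * c1) - of_real ?a * (of_real (q/b1) * c1) - of_real b1 * c1) *s e1"
      unfolding a1[OF that] unfolding k1v[OF that] H_def Hc[OF o] psi_def lin3 ..
    also have "of_real E0 * (of_real (p/b1) * c0) - of_real ?a * (of_real (p/b1) * c0) - of_real b1 * c0
       = of_real ((E0 - ?a) * (p/b1) - b1) * c0" by (simp add: algebra_simps)
    also have "of_real E1 * (of_real (q/b1) * c1) - of_real ?a * (of_real (q/b1) * c1) - of_real b1 * c1
       = of_real ((E1 - ?a) * (q/b1) - b1) * c1" by (simp add: algebra_simps)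
    finally show ?thesis by (simp only: rp1[OF that] rq1[OF that] diff_self of_real_0 mult_zero_left vector_smult_lzero add_0_right)
  qed
  have K2: "krylov H psi n = 0" if "n \<ge> 2" for n
  proof (cases "b1 = 0")
    case True
    then have "snd (lanczos H psi (Suc 0)) = (0,0)" using L1 True by (simp add: k1_def del: lanczos.simps)
    then show ?thesis using lz_after[of H psi "Suc 0" n] H0 that by simp
  next
    case False
    have "lanczos H psi (Suc (Suc 0)) = (k1, 0, 0)"
      by (subst lanczos.simps(2), simp only: L1 prod.case Let_def A2[OF False]) simp
    then have "snd (lanczos H psi (Suc (Suc 0))) = (0,0)" by (simp del: lanczos.simps)
    then show ?thesis using lz_after[of H psi "Suc (Suc 0)" n] H0 that by simp
  qed
  have SP: "spread_complexity H psi t = (cmod (cinner k1 (evolve H t psi)))\<^sup>2"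
  proof -
    let ?f = "\<lambda>n. real n * (cmod (cinner (krylov H psi n) (evolve H t psi)))\<^sup>2"
    have fe: "?f = (\<lambda>n. if n = 1 then ?f n else 0)"
    proof
      fix n show "?f n = (if n = 1 then ?f n else 0)"
        using K2[of n] by (cases "n = 0 \<or> n = 1") auto
    qed
    have "(\<lambda>n. if n = 1 then ?f n else 0) sums ?f 1" by (rule sums_single)
    then have "?f sums ?f 1" by (subst fe)
    then show ?thesis unfolding spread_complexity_def using K1 by (simp add: sums_unique[symmetric])
  qed
  have CO: "l1_coherence e0 e1 psi = 2 * x * y"
    by (simp add: l1_coherence_def psi_def ip0[OF o] ip1[OF o] norm_mult x_def y_def)
  show "spread_complexity (hamiltonian E0 E1 e0 e1) (c0 *s e0 + c1 *s e1) t =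
      (l1_coherence e0 e1 (c0 *s e0 + c1 *s e1))\<^sup>2 * (sin ((E1 - E0) * t / 2))\<^sup>2"
  proof -
    let ?s = "(sin ((E1 - E0) * t / 2))\<^sup>2"
    let ?x0 = "exp (- \<i> * of_real t * of_real E0)"
    let ?x1 = "exp (- \<i> * of_real t * of_real E1)"
    have goal: "spread_complexity H psi t = (l1_coherence e0 e1 psi)\<^sup>2 * ?s"
    proof (cases "b1 = 0")
      case True
      then have "k1 = 0" by (simp add: k1_def)
      moreover have "x * y = 0" using True b1v w0 by simp
      then have "2 * x * y = 0" by simp
      ultimately show ?thesis unfolding SP CO by simp
    next
      case False
      have nz: "w \<noteq> 0" "x \<noteq> 0" "y \<noteq> 0" using False b1v by auto
      define r where "r = w * x\<^sup>2 * y\<^sup>2 / b1"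
      have ev: "evolve H t psi = (?x0 * c0) *s e0 + (?x1 * c1) *s e1"
        unfolding H_def psi_def by (rule evolve_eq[OF o])
      have gen: "cnj (of_real a * c) * (e * c) = of_real a * e * (cnj c * c)" for a c e
        by (simp add: mult_ac)
      have "cinner k1 (evolve H t psi) = cnj (of_real (p/b1) * c0) * (?x0 * c0) + cnj (of_real (q/b1) * c1) * (?x1 * c1)"
        unfolding ev k1v[OF False] ip[OF o] ..
      also have "\<dots> = of_real (p/b1) * ?x0 * of_real (x\<^sup>2) + of_real (q/b1) * ?x1 * of_real (y\<^sup>2)"
        unfolding gen cnj_mult_self x_def y_def ..
      also have "\<dots> = of_real (p/b1 * x\<^sup>2) * ?x0 + of_real (q/b1 * y\<^sup>2) * ?x1"
        by (simp add: mult_ac)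
      also have "p/b1 * x\<^sup>2 = - r" by (simp add: p_def r_def)
      also have "q/b1 * y\<^sup>2 = r" by (simp add: q_def r_def)
      also have "of_real (- r) * ?x0 + of_real r * ?x1 = of_real r * (?x1 - ?x0)"
        by (simp add: algebra_simps)
      finally have "(cmod (cinner k1 (evolve H t psi)))\<^sup>2 = r\<^sup>2 * (cmod (?x1 - ?x0))\<^sup>2"
        by (simp add: norm_mult power_mult_distrib)
      also have "(cmod (?x1 - ?x0))\<^sup>2 = 4 * ?s" by (rule exp_diff_sq)
      also have "r\<^sup>2 = x\<^sup>2 * y\<^sup>2"
      proof -
        have "r\<^sup>2 = (w\<^sup>2 * x\<^sup>2 * y\<^sup>2) * (x\<^sup>2 * y\<^sup>2) / b1\<^sup>2"
          by (simp add: r_def power_divide power_mult_distrib power2_eq_square mult_ac)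
        also have "\<dots> = x\<^sup>2 * y\<^sup>2" unfolding b1sq[symmetric] using False by simp
        finally show ?thesis .
      qed
      finally show ?thesis unfolding SP CO by (simp add: power_mult_distrib mult_ac)
    qed
    then show ?thesis unfolding H_def psi_def .
  qed
qed

end
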